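(* Let $p$ be the POP of length 4 defined by the relations $1>2$ and $4>3$; equivalently, avoiding $p$ means simultaneously avoiding the patterns $2134, 3124, 4123, 3214, 4213, 4312$. Let $a(n)=|S_n(p)|$. Then $a(0)=1$, and for $n\geq 1$, $a(n)=2a(n-1)+2^{n-1}-2$, so that $a(n)=(n-2)2^{n-1}+2$ for $n\geq 1$. Moreover, $$\sum_{n\geq 0}a(n)x^n=\frac{1-4x+5x^2}{(1-x)(1-2x)^2}.$$
   Context: An $n$-permutation is a word $\pi=\pi_1\cdots\pi_n$ containing each of $1,\ldots,n$ exactly once; $S_n$ is the set of $n$-permutations ($S_0$ consists of the empty permutation). A partially ordered pattern (POP) $p$ of length $k$ is a partial order on the label set $\{1,\ldots,k\}$; it is described by a set of generating relations, where a relation $x>y$ means that in an occurrence the entry in the $x$-th chosen position must be larger than the entry in the $y$-th chosen position, and labels not involved in any relation are unconstrained. An $n$-permutation $\pi$ contains $p$ if there are indices $1\leq i_1<\cdots<i_k\leq n$ such that $\pi_{i_x}>\pi_{i_y}$ whenever $x>y$ in the partial order; otherwise $\pi$ avoids $p$. $S_n(p)$ denotes the set of $n$-permutations avoiding $p$. A permutation $\pi$ avoids a classical pattern $q$ if it has no subsequence order-isomorphic to $q$. *)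

theory Defs
  imports "HOL-Computational_Algebra.Formal_Power_Series"
begin

definition perms :: "nat \<Rightarrow> nat list set" where
  "perms n = {\<pi>. distinct \<pi> \<and> set \<pi> = {1..n}}"

text \<open>A POP of length k given by a set R of generating relations (x,y) meaning x > y,
  labels in {1..k}. Positions in the word are 0-indexed.\<close>
definition contains_pop :: "nat \<Rightarrow> (nat \<times> nat) set \<Rightarrow> nat list \<Rightarrow> bool" where
  "contains_pop k R \<pi> \<longleftrightarrow>
     (\<exists>i::nat \<Rightarrow> nat.
        (\<forall>x\<in>{1..k}. \<forall>y\<in>{1..k}. x < y \<longrightarrow> i x < i y) \<and>
        (\<forall>x\<in>{1..k}. i x < length \<pi>) \<and>
        (\<forall>(x, y)\<in>R. \<pi> ! (i x) > \<pi> ! (i y)))"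

definition avoids_pop :: "nat \<Rightarrow> (nat \<times> nat) set \<Rightarrow> nat list \<Rightarrow> bool" where
  "avoids_pop k R \<pi> \<longleftrightarrow> \<not> contains_pop k R \<pi>"

definition contains_classical :: "nat list \<Rightarrow> nat list \<Rightarrow> bool" where
  "contains_classical q \<pi> \<longleftrightarrow>
     (\<exists>i::nat \<Rightarrow> nat.
        (\<forall>a<length q. \<forall>b<length q. a < b \<longrightarrow> i a < i b) \<and>
        (\<forall>a<length q. i a < length \<pi>) \<and>
        (\<forall>a<length q. \<forall>b<length q. q ! a < q ! b \<longleftrightarrow> \<pi> ! (i a) < \<pi> ! (i b)))"

definition avoids_classical :: "nat list \<Rightarrow> nat list \<Rightarrow> bool" where
  "avoids_classical q \<pi> \<longleftrightarrow> \<not> contains_classical q \<pi>"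

definition pop_p :: "(nat \<times> nat) set" where
  "pop_p = {(1, 2), (4, 3)}"

definition a_seq :: "nat \<Rightarrow> nat" where
  "a_seq n = card {\<pi> \<in> perms n. avoids_pop 4 pop_p \<pi>}"

end

theory Submission
  imports Defs
begin

definition good :: "nat list \<Rightarrow> bool" where
  "good \<pi> \<longleftrightarrow> \<not>(\<exists>i1 i2 i3 i4. i1<i2 \<and> i2<i3 \<and> i3<i4 \<and> i4<length \<pi> \<and>
      \<pi>!i2 < \<pi>!i1 \<and> \<pi>!i3 < \<pi>!i4)"

lemma avoids_good: "avoids_pop 4 pop_p \<pi> \<longleftrightarrow> good \<pi>"
proof -
  have "contains_pop 4 pop_p \<pi> \<longleftrightarrow> \<not> good \<pi>"
  proof
    assume "contains_pop 4 pop_p \<pi>"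
    then obtain i where h1: "\<forall>x\<in>{1..4}. \<forall>y\<in>{1..4}. x < y \<longrightarrow> i x < i y"
      and h2: "\<forall>x\<in>{1..4::nat}. i x < length \<pi>"
      and h3: "\<forall>(x, y)\<in>pop_p. \<pi> ! (i x) > \<pi> ! (i y)"
      unfolding contains_pop_def by blast
    have "i 1 < i 2" "i 2 < i 3" "i 3 < i 4" "i 4 < length \<pi>" using h1 h2 by auto
    moreover have "\<pi>!i 2 < \<pi>!i 1" "\<pi>!i 3 < \<pi>!i 4" using h3 by (auto simp: pop_p_def)
    ultimately show "\<not> good \<pi>" unfolding good_def by blast
  next
    assume "\<not> good \<pi>"
    then obtain i1 i2 i3 i4 where h: "i1<i2" "i2<i3" "i3<i4" "i4<length \<pi>"
      "\<pi>!i2 < \<pi>!i1" "\<pi>!i3 < \<pi>!i4" unfolding good_def by blast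
    define i where "i = (\<lambda>x::nat. if x = 1 then i1 else if x = 2 then i2 else if x = 3 then i3 else i4)"
    have e: "{1..4::nat} = {1,2,3,4}" by auto
    show "contains_pop 4 pop_p \<pi>" unfolding contains_pop_def
      apply (rule exI[of _ i])
      using h by (auto simp: e i_def pop_p_def)
  qed
  thus ?thesis unfolding avoids_pop_def by blast
qed

lemma good_Cons:
  assumes "\<forall>y\<in>set \<tau>. x < y"
  shows "good (x # \<tau>) \<longleftrightarrow> good \<tau>"
proof
  assume g: "good (x # \<tau>)"
  show "good \<tau>" unfolding good_def
  proof
    assume "\<exists>i1 i2 i3 i4. i1<i2 \<and> i2<i3 \<and> i3<i4 \<and> i4<length \<tau> \<and> \<tau>!i2 < \<tau>!i1 \<and> \<tau>!i3 < \<tau>!i4"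
    then obtain i1 i2 i3 i4 where h: "i1<i2" "i2<i3" "i3<i4" "i4<length \<tau>"
      "\<tau>!i2 < \<tau>!i1" "\<tau>!i3 < \<tau>!i4" by blast
    have "\<not> good (x#\<tau>)" unfolding good_def
      apply (rule notI, erule notE)
      apply (rule exI[of _ "Suc i1"], rule exI[of _ "Suc i2"], rule exI[of _ "Suc i3"], rule exI[of _ "Suc i4"])
      using h by simp
    with g show False by blast
  qed
next
  assume g: "good \<tau>"
  show "good (x # \<tau>)" unfolding good_def
  proof
    assume "\<exists>i1 i2 i3 i4. i1<i2 \<and> i2<i3 \<and> i3<i4 \<and> i4<length (x#\<tau>) \<and> (x#\<tau>)!i2 < (x#\<tau>)!i1 \<and> (x#\<tau>)!i3 < (x#\<tau>)!i4"
    then obtain i1 i2 i3 i4 where h: "i1<i2" "i2<i3" "i3<i4" "i4<length (x#\<tau>)"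
      "(x#\<tau>)!i2 < (x#\<tau>)!i1" "(x#\<tau>)!i3 < (x#\<tau>)!i4" by blast
    show False
    proof (cases i1)
      case 0
      then obtain k where "i2 = Suc k" using h by (cases i2) auto
      moreover have "k < length \<tau>" using h \<open>i2 = Suc k\<close> by simp
      then have "\<tau>!k \<in> set \<tau>" by (rule nth_mem)
      then have "x < \<tau>!k" using assms by blast
      then show ?thesis using h 0 \<open>i2 = Suc k\<close> by simp
    next
      case (Suc j1)
      obtain j2 j3 j4 where "i2 = Suc j2" "i3 = Suc j3" "i4 = Suc j4" using h Suc
        by (cases i2; cases i3; cases i4) auto
      then have "\<not> good \<tau>" unfolding good_def using h Suc by auto
      with g show False by blast
    qed
  qed
qed

lemma good_snoc:
  assumes "\<forall>y\<in>set \<tau>. x < y"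
  shows "good (\<tau> @ [x]) \<longleftrightarrow> good \<tau>"
proof
  assume g: "good (\<tau> @ [x])"
  show "good \<tau>" unfolding good_def
  proof
    assume "\<exists>i1 i2 i3 i4. i1<i2 \<and> i2<i3 \<and> i3<i4 \<and> i4<length \<tau> \<and> \<tau>!i2 < \<tau>!i1 \<and> \<tau>!i3 < \<tau>!i4"
    then obtain i1 i2 i3 i4 where h: "i1<i2" "i2<i3" "i3<i4" "i4<length \<tau>"
      "\<tau>!i2 < \<tau>!i1" "\<tau>!i3 < \<tau>!i4" by blast
    have "\<not> good (\<tau>@[x])" unfolding good_def
      apply (rule notI, erule notE)
      apply (rule exI[of _ "i1"], rule exI[of _ "i2"], rule exI[of _ "i3"], rule exI[of _ "i4"])
      using h by (simp add: nth_append)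
    with g show False by blast
  qed
next
  assume g: "good \<tau>"
  show "good (\<tau> @ [x])" unfolding good_def
  proof
    assume "\<exists>i1 i2 i3 i4. i1<i2 \<and> i2<i3 \<and> i3<i4 \<and> i4<length (\<tau>@[x]) \<and> (\<tau>@[x])!i2 < (\<tau>@[x])!i1 \<and> (\<tau>@[x])!i3 < (\<tau>@[x])!i4"
    then obtain i1 i2 i3 i4 where h: "i1<i2" "i2<i3" "i3<i4" "i4<length (\<tau>@[x])"
      "(\<tau>@[x])!i2 < (\<tau>@[x])!i1" "(\<tau>@[x])!i3 < (\<tau>@[x])!i4" by blast
    show False
    proof (cases "i4 = length \<tau>")
      case True
      have "i3 < length \<tau>" using h True by simp
      then have "\<tau>!i3 \<in> set \<tau>" by (rule nth_mem)
      then have "x < \<tau>!i3" using assms by blast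
      then show ?thesis using h True by (simp add: nth_append)
    next
      case False
      then have "i4 < length \<tau>" using h by simp
      then have "\<not> good \<tau>" unfolding good_def using h by (auto simp: nth_append)
      with g show False by blast
    qed
  qed
qed

lemma nth_mid_A: "k < length A \<Longrightarrow> (A @ x # D) ! k = A ! k"
  by (simp add: nth_append)
lemma nth_mid_x: "(A @ x # D) ! length A = x"
  by (simp add: nth_append)
lemma nth_mid_D: "(A @ x # D) ! (Suc (length A) + j) = D ! j"
  by (simp add: nth_append)
lemma nth_mid_D': "length A < k \<Longrightarrow> (A @ x # D) ! k = D ! (k - Suc (length A))"
  using nth_mid_D[of A x D "k - Suc (length A)"] by simp

lemma good_mid:
  assumes "A \<noteq> []" "D \<noteq> []" "distinct (A @ x # D)" "\<forall>y\<in>set A. x<y" "\<forall>y\<in>set D. x<y"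
  shows "good (A @ x # D) \<longleftrightarrow> sorted_wrt (<) A \<and> sorted_wrt (>) D"
proof
  assume g: "good (A @ x # D)"
  have sA: "sorted_wrt (<) A"
    unfolding sorted_wrt_iff_nth_less
  proof (intro allI impI)
    fix i j assume ij: "i < j" "j < length A"
    show "A!i < A!j"
    proof (rule ccontr)
      assume "\<not> A!i < A!j"
      moreover have "A!i \<noteq> A!j" using assms(3) ij by (simp add: nth_eq_iff_index_eq)
      ultimately have lt: "A!j < A!i" by simp
      have d0: "x < D!0" using assms(2,5) by simp
      have "\<not> good (A @ x # D)" unfolding good_def
        apply (rule notI, erule notE)
        apply (rule exI[of _ i], rule exI[of _ j], rule exI[of _ "length A"], rule exI[of _ "Suc (length A) + 0"])
        using ij lt d0 assms(2) nth_mid_D[of A x D 0] by (simp add: nth_mid_A nth_mid_x)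
      with g show False by blast
    qed
  qed
  have sD: "sorted_wrt (>) D"
    unfolding sorted_wrt_iff_nth_less
  proof (intro allI impI)
    fix i j assume ij: "i < j" "j < length D"
    show "D!i > D!j"
    proof (rule ccontr)
      assume "\<not> D!i > D!j"
      moreover have "D!i \<noteq> D!j" using assms(3) ij by (simp add: nth_eq_iff_index_eq)
      ultimately have lt: "D!i < D!j" by simp
      have a0: "x < A!0" using assms(1,4) by simp
      have "\<not> good (A @ x # D)" unfolding good_def
        apply (rule notI, erule notE)
        apply (rule exI[of _ 0], rule exI[of _ "length A"], rule exI[of _ "Suc (length A) + i"], rule exI[of _ "Suc (length A) + j"])
        using ij lt a0 assms(1) by (simp add: nth_mid_A nth_mid_x nth_mid_D del: add_Suc)
      with g show False by blast
    qed
  qed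
  show "sorted_wrt (<) A \<and> sorted_wrt (>) D" using sA sD by blast
next
  assume s: "sorted_wrt (<) A \<and> sorted_wrt (>) D"
  show "good (A @ x # D)" unfolding good_def
  proof
    assume "\<exists>i1 i2 i3 i4. i1<i2 \<and> i2<i3 \<and> i3<i4 \<and> i4<length (A @ x # D) \<and> (A @ x # D)!i2 < (A @ x # D)!i1 \<and> (A @ x # D)!i3 < (A @ x # D)!i4"
    then obtain i1 i2 i3 i4 where h: "i1<i2" "i2<i3" "i3<i4" "i4<length (A @ x # D)"
      "(A @ x # D)!i2 < (A @ x # D)!i1" "(A @ x # D)!i3 < (A @ x # D)!i4" by blast
    show False
    proof (cases "i2 < length A")
      case True
      then have "A!i2 < A!i1" using h by (simp add: nth_mid_A)
      moreover have "A!i1 < A!i2" using s True h(1) sorted_wrt_nth_less[of "(<)" A i1 i2] by blast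
      ultimately show False by simp
    next
      case False
      have "D!(i3 - Suc (length A)) < D!(i4 - Suc (length A))"
        using h False by (simp add: nth_mid_D')
      moreover have "D!(i3 - Suc (length A)) > D!(i4 - Suc (length A))"
        using s False h sorted_wrt_nth_less[of "(>)" D "i3 - Suc (length A)" "i4 - Suc (length A)"] by simp
      ultimately show False by simp
    qed
  qed
qed

definition G :: "nat set \<Rightarrow> nat list set" where
  "G S = {\<pi>. distinct \<pi> \<and> set \<pi> = S \<and> good \<pi>}"

lemma finite_G: "finite S \<Longrightarrow> finite (G S)"
  by (rule finite_subset[OF _ finite_subset_distinct[of S]]) (auto simp: G_def)

definition Mid :: "nat \<Rightarrow> nat set \<Rightarrow> nat set \<Rightarrow> nat list" where
  "Mid m S' T = sorted_list_of_set T @ m # rev (sorted_list_of_set (S' - T))"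

lemma G_decomp:
  assumes fin: "finite S" and c: "card S \<ge> 2" and m: "m = Min S" and S': "S' = S - {m}"
  shows "G S = Cons m ` G S' \<union> (\<lambda>\<tau>. \<tau>@[m]) ` G S' \<union> Mid m S' ` {T. T \<subseteq> S' \<and> T \<noteq> {} \<and> T \<noteq> S'}"
proof -
  have ne: "S \<noteq> {}" using c by auto
  have mS: "m \<in> S" using m fin ne by simp
  have less: "\<forall>y\<in>S'. m < y" using S' m fin ne by (auto simp: order.not_eq_order_implies_strict)
  have finS': "finite S'" using fin S' by simp
  have cS': "card S' \<ge> 1" using c S' mS fin by simp
  have S'ne: "S' \<noteq> {}" using cS' by auto
  have mS': "m \<notin> S'" using S' by simp
  have SS': "S = insert m S'" using S' mS by auto
  show ?thesis
  proof (intro equalityI subsetI)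
    fix \<pi> assume "\<pi> \<in> G S"
    then have d: "distinct \<pi>" and st: "set \<pi> = S" and g: "good \<pi>" by (auto simp: G_def)
    obtain A D where pi: "\<pi> = A @ m # D" using mS st split_list by metis
    have mA: "m \<notin> set A" and mD: "m \<notin> set D" and dAD: "set A \<inter> set D = {}"
      and dA: "distinct A" and dD: "distinct D" using d pi by auto
    have sAD: "set A \<union> set D = S'" using st pi S' mA mD by auto
    show "\<pi> \<in> Cons m ` G S' \<union> (\<lambda>\<tau>. \<tau>@[m]) ` G S' \<union> Mid m S' ` {T. T \<subseteq> S' \<and> T \<noteq> {} \<and> T \<noteq> S'}"
    proof (cases "A = []")
      case True
      then have "good D" using g pi good_Cons[of D m] less sAD by auto
      then have "D \<in> G S'" using dD sAD True by (auto simp: G_def)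
      then show ?thesis using pi True by blast
    next
      case An: False
      show ?thesis
      proof (cases "D = []")
        case True
        then have "good A" using g pi good_snoc[of A m] less sAD by auto
        then have "A \<in> G S'" using dA sAD True by (auto simp: G_def)
        then show ?thesis using pi True by blast
      next
        case Dn: False
        have "sorted_wrt (<) A \<and> sorted_wrt (>) D"
          using good_mid[of A D m] An Dn d pi less sAD g by auto
        then have sA: "sorted_wrt (<) A" and sD: "sorted_wrt (>) D" by auto
        have LA: "sorted_list_of_set (set A) = A"
          using sA dA by (simp add: sorted_list_of_set.idem_if_sorted_distinct strict_sorted_iff)
        have sD': "sorted (rev D)" using sD
          by (simp add: sorted_wrt_rev) (rule sorted_wrt_mono_rel[of _ "\<lambda>x y. y < x"], auto)
        have LD: "sorted_list_of_set (set D) = rev D"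
          using sD' dD sorted_list_of_set.idem_if_sorted_distinct[of "rev D"] by simp
        have "S' - set A = set D" using sAD dAD by auto
        then have "\<pi> = Mid m S' (set A)" unfolding Mid_def using LA LD pi by simp
        moreover have "set A \<subseteq> S'" "set A \<noteq> {}" using sAD An by auto
        moreover have "set A \<noteq> S'"
        proof
          assume "set A = S'"
          moreover obtain y where "y \<in> set D" using Dn by (cases D) auto
          ultimately show False using sAD dAD by auto
        qed
        ultimately show ?thesis by blast
      qed
    qed
  next
    fix \<pi> assume "\<pi> \<in> Cons m ` G S' \<union> (\<lambda>\<tau>. \<tau>@[m]) ` G S' \<union> Mid m S' ` {T. T \<subseteq> S' \<and> T \<noteq> {} \<and> T \<noteq> S'}"
    then consider (a) \<tau> where "\<tau> \<in> G S'" "\<pi> = m # \<tau>" | (b) \<tau> where "\<tau> \<in> G S'" "\<pi> = \<tau> @ [m]"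
      | (c) T where "T \<subseteq> S'" "T \<noteq> {}" "T \<noteq> S'" "\<pi> = Mid m S' T" by blast
    then show "\<pi> \<in> G S"
    proof cases
      case a
      then show ?thesis using good_Cons[of \<tau> m] less mS' SS' by (auto simp: G_def)
    next
      case b
      then show ?thesis using good_snoc[of \<tau> m] less mS' SS' by (auto simp: G_def)
    next
      case c
      have fT: "finite T" "finite (S' - T)" using c(1) finS' finite_subset by auto
      define A where "A = sorted_list_of_set T"
      define D where "D = rev (sorted_list_of_set (S' - T))"
      have pi: "\<pi> = A @ m # D" using c(4) by (simp add: Mid_def A_def D_def)
      have setA: "set A = T" and setD: "set D = S' - T" using fT by (auto simp: A_def D_def)
      have An: "A \<noteq> []" using setA c(2) by auto
      have Dn: "D \<noteq> []" using setD c(1,3) by auto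
      have d: "distinct (A @ m # D)" using setA setD c(1) mS' by (auto simp: A_def D_def)
      have sA: "sorted_wrt (<) A" by (simp add: A_def)
      have sD: "sorted_wrt (>) D" by (simp add: D_def sorted_wrt_rev)
      have g: "good (A @ m # D)"
        using good_mid[of A D m] An Dn d less setA setD c(1) sA sD by auto
      have "set (A @ m # D) = S" using setA setD c(1) SS' by auto
      then show ?thesis using d g pi by (simp add: G_def)
    qed
  qed
qed

lemma G_single: "G {m} = {[m]}"
proof (intro equalityI subsetI)
  fix \<pi> assume "\<pi> \<in> G {m}"
  then have d: "distinct \<pi>" and st: "set \<pi> = {m}" by (auto simp: G_def)
  have "length \<pi> = 1" using distinct_card[OF d] st by simp
  then obtain y where "\<pi> = [y]" by (cases \<pi>) auto
  then show "\<pi> \<in> {[m]}" using st by simp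
next
  fix \<pi> assume "\<pi> \<in> {[m]}"
  then show "\<pi> \<in> G {m}" by (auto simp: G_def good_def)
qed

lemma card_G:
  "finite S \<Longrightarrow> card S = Suc n \<Longrightarrow> int (card (G S)) = (int (Suc n) - 2) * 2^n + 2"
proof (induction n arbitrary: S)
  case 0
  then obtain m where "S = {m}" by (auto simp: card_Suc_eq)
  then show ?case by (simp add: G_single)
next
  case (Suc n)
  note fin = Suc.prems(1)
  define m where "m = Min S"
  define S' where "S' = S - {m}"
  have ne: "S \<noteq> {}" using Suc.prems by auto
  have mS: "m \<in> S" using m_def fin ne by simp
  have finS': "finite S'" using fin S'_def by simp
  have cS': "card S' = Suc n" using Suc.prems mS by (simp add: S'_def)
  have mS': "m \<notin> S'" using S'_def by simp
  have IH: "int (card (G S')) = (int (Suc n) - 2) * 2^n + 2" using Suc.IH finS' cS' by blast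
  define P where "P = {T. T \<subseteq> S' \<and> T \<noteq> {} \<and> T \<noteq> S'}"
  have dec: "G S = Cons m ` G S' \<union> (\<lambda>\<tau>. \<tau>@[m]) ` G S' \<union> Mid m S' ` P"
    using G_decomp[OF fin _ m_def S'_def] Suc.prems unfolding P_def by simp
  have S'ne: "S' \<noteq> {}" using cS' by auto
  have fG: "finite (G S')" using finite_G finS' by blast
  have fP: "finite P" unfolding P_def using finS' by (simp add: finite_subset[of _ "Pow S'"] subset_eq)
  have c1: "card (Cons m ` G S') = card (G S')" by (rule card_image) simp
  have c2: "card ((\<lambda>\<tau>. \<tau>@[m]) ` G S') = card (G S')" by (rule card_image) (simp add: inj_on_def)
  have inj3: "inj_on (Mid m S') P"
  proof (rule inj_onI)
    fix T T' assume T: "T \<in> P" and T': "T' \<in> P" and e: "Mid m S' T = Mid m S' T'"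
    have fT: "finite T" "finite T'" using T T' finS' finite_subset unfolding P_def by auto
    have fD: "finite (S' - T)" using finS' by simp
    have "m \<notin> set (sorted_list_of_set T)" "m \<notin> set (rev (sorted_list_of_set (S' - T)))"
      using T mS' fT fD unfolding P_def by auto
    then have "sorted_list_of_set T = sorted_list_of_set T'"
      using e append_Cons_eq_iff unfolding Mid_def by metis
    then show "T = T'" using fT by (metis sorted_list_of_set.set_sorted_key_list_of_set)
  qed
  have c3: "card (Mid m S' ` P) = card P" by (rule card_image[OF inj3])
  have PP: "P = Pow S' - {{}, S'}" unfolding P_def by auto
  have cP: "card P = 2^Suc n - 2"
    unfolding PP using finS' cS' S'ne by (simp add: card_Diff_subset card_Pow)
  have disj1: "Cons m ` G S' \<inter> (\<lambda>\<tau>. \<tau>@[m]) ` G S' = {}"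
  proof (rule ccontr)
    assume "Cons m ` G S' \<inter> (\<lambda>\<tau>. \<tau>@[m]) ` G S' \<noteq> {}"
    then obtain \<tau> \<tau>' where t: "\<tau> \<in> G S'" "\<tau>' \<in> G S'" "m # \<tau> = \<tau>' @ [m]" by blast
    have "\<tau>' \<noteq> []" using t(2) S'ne by (auto simp: G_def)
    then have "m \<in> set \<tau>" using t(3) by (cases \<tau>') auto
    then show False using t(1) mS' by (auto simp: G_def)
  qed
  have disj2: "(Cons m ` G S' \<union> (\<lambda>\<tau>. \<tau>@[m]) ` G S') \<inter> Mid m S' ` P = {}"
  proof (rule ccontr)
    assume "(Cons m ` G S' \<union> (\<lambda>\<tau>. \<tau>@[m]) ` G S') \<inter> Mid m S' ` P \<noteq> {}"
    then obtain \<tau> T where t: "\<tau> \<in> G S'" "T \<in> P" "m # \<tau> = Mid m S' T \<or> \<tau> @ [m] = Mid m S' T" by blast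
    have fT: "finite T" "finite (S' - T)" using t(2) finS' finite_subset unfolding P_def by auto
    have An: "sorted_list_of_set T \<noteq> []" using fT t(2) unfolding P_def by auto
    have Dn: "sorted_list_of_set (S' - T) \<noteq> []" using fT t(2) unfolding P_def by auto
    have mt: "m \<notin> set \<tau>" using t(1) mS' by (auto simp: G_def)
    show False
    proof (cases "m # \<tau> = Mid m S' T")
      case True
      then have "m \<in> set \<tau>" using An unfolding Mid_def by (cases "sorted_list_of_set T") auto
      then show False using mt by simp
    next
      case False
      then have e: "\<tau> @ [m] = Mid m S' T" using t(3) by blast
      have "last (Mid m S' T) \<in> set (rev (sorted_list_of_set (S' - T)))"
        using Dn unfolding Mid_def by (simp del: set_rev)
      then have "last (Mid m S' T) \<in> S'" using fT by auto
      then show False using e[symmetric] mS' by simp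
    qed
  qed
  have "card (G S) = card (G S') + card (G S') + card P"
    unfolding dec
    by (subst card_Un_disjoint[OF _ _ disj2], simp_all add: fG fP,
        subst card_Un_disjoint[OF _ _ disj1], simp_all add: fG c1 c2 c3)
  then have A: "int (card (G S)) = 2 * int (card (G S')) + int (card P)" by simp
  have "(2::nat) \<le> 2^Suc n" using one_le_power[of "2::nat" n] by simp
  then have "int (card P) = 2^Suc n - 2" using cP by (simp add: of_nat_diff)
  then have "int (card (G S)) = 2 * int (card (G S')) + 2^Suc n - 2" using A by simp
  then show ?case using IH by (simp add: algebra_simps)
qed

lemma all4: "(\<forall>a<(4::nat). P a) = (P 0 \<and> P 1 \<and> P 2 \<and> P 3)"
  by (auto simp: numeral_eq_Suc less_Suc_eq)

lemma pat_exists: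
  fixes v1 v2 v3 v4 :: nat
  assumes "v2 < v1" "v3 < v4" "v1 \<noteq> v3" "v1 \<noteq> v4" "v2 \<noteq> v3" "v2 \<noteq> v4"
  shows "\<exists>q\<in>{[2,1,3,4], [3,1,2,4], [4,1,2,3], [3,2,1,4], [4,2,1,3], [4,3,1,2::nat]}.
     \<forall>a<4. \<forall>b<4. q!a < q!b \<longleftrightarrow> [v1,v2,v3,v4]!a < [v1,v2,v3,v4]!b"
proof -
  consider "v1 < v3" | "v3 < v1" "v1 < v4" "v2 < v3" | "v3 < v1" "v1 < v4" "v3 < v2"
    | "v4 < v1" "v2 < v3" | "v4 < v1" "v3 < v2" "v2 < v4" | "v4 < v2"
    using assms by linarith
  then show ?thesis
  proof cases
    case 1 show ?thesis by (rule bexI[of _ "[2,1,3,4]"]) (use 1 assms in \<open>simp_all add: all4\<close>)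
  next
    case 2 show ?thesis by (rule bexI[of _ "[3,1,2,4]"]) (use 2 assms in \<open>simp_all add: all4\<close>)
  next
    case 3 show ?thesis by (rule bexI[of _ "[3,2,1,4]"]) (use 3 assms in \<open>simp_all add: all4\<close>)
  next
    case 4 show ?thesis by (rule bexI[of _ "[4,1,2,3]"]) (use 4 assms in \<open>simp_all add: all4\<close>)
  next
    case 5 show ?thesis by (rule bexI[of _ "[4,2,1,3]"]) (use 5 assms in \<open>simp_all add: all4\<close>)
  next
    case 6 show ?thesis by (rule bexI[of _ "[4,3,1,2]"]) (use 6 assms in \<open>simp_all add: all4\<close>)
  qed
qed

lemma class_iff:
  assumes d: "distinct \<pi>"
  shows "(\<exists>q\<in>{[2,1,3,4], [3,1,2,4], [4,1,2,3], [3,2,1,4], [4,2,1,3], [4,3,1,2]}.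
            contains_classical q \<pi>) \<longleftrightarrow> \<not> good \<pi>"
proof
  assume "\<exists>q\<in>{[2,1,3,4], [3,1,2,4], [4,1,2,3], [3,2,1,4], [4,2,1,3], [4,3,1,2]}. contains_classical q \<pi>"
  then obtain q where q: "q \<in> {[2,1,3,4], [3,1,2,4], [4,1,2,3], [3,2,1,4], [4,2,1,3], [4,3,1,2]}"
    and c: "contains_classical q \<pi>" by blast
  have lq: "length q = 4" and q10: "q!1 < q!0" and q23: "q!2 < q!3" using q by auto
  obtain i where h1: "\<forall>a<length q. \<forall>b<length q. a < b \<longrightarrow> i a < i b"
    and h2: "\<forall>a<length q. i a < length \<pi>"
    and h3: "\<forall>a<length q. \<forall>b<length q. q ! a < q ! b \<longleftrightarrow> \<pi> ! (i a) < \<pi> ! (i b)"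
    using c unfolding contains_classical_def by blast
  have "i 0 < i 1" "i 1 < i 2" "i 2 < i 3" "i 3 < length \<pi>" using h1 h2 lq by auto
  moreover have "\<pi>!(i 1) < \<pi>!(i 0)" using h3 lq q10 by auto
  moreover have "\<pi>!(i 2) < \<pi>!(i 3)" using h3 lq q23 by auto
  ultimately show "\<not> good \<pi>" unfolding good_def by blast
next
  assume "\<not> good \<pi>"
  then obtain j1 j2 j3 j4 where h: "j1<j2" "j2<j3" "j3<j4" "j4<length \<pi>"
    "\<pi>!j2 < \<pi>!j1" "\<pi>!j3 < \<pi>!j4" unfolding good_def by blast
  have ne: "\<pi>!j1 \<noteq> \<pi>!j3" "\<pi>!j1 \<noteq> \<pi>!j4" "\<pi>!j2 \<noteq> \<pi>!j3" "\<pi>!j2 \<noteq> \<pi>!j4"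
    using h d by (simp_all add: nth_eq_iff_index_eq)
  obtain q where q: "q \<in> {[2,1,3,4], [3,1,2,4], [4,1,2,3], [3,2,1,4], [4,2,1,3], [4,3,1,2::nat]}"
    and qq: "\<forall>a<4. \<forall>b<4. q!a < q!b \<longleftrightarrow> [\<pi>!j1,\<pi>!j2,\<pi>!j3,\<pi>!j4]!a < [\<pi>!j1,\<pi>!j2,\<pi>!j3,\<pi>!j4]!b"
    using pat_exists[OF h(5) h(6) ne] by blast
  have lq: "length q = 4" using q by auto
  define i where "i = (\<lambda>a::nat. if a = 0 then j1 else if a = 1 then j2 else if a = 2 then j3 else j4)"
  have pi: "\<forall>a<4. \<pi>!(i a) = [\<pi>!j1,\<pi>!j2,\<pi>!j3,\<pi>!j4]!a" by (simp add: all4 i_def)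
  have "contains_classical q \<pi>" unfolding contains_classical_def lq
  proof (rule exI[of _ i], intro conjI)
    show "\<forall>a<4. \<forall>b<4. a < b \<longrightarrow> i a < i b" using h by (simp add: all4 i_def)
    show "\<forall>a<4. i a < length \<pi>" using h by (simp add: all4 i_def)
    show "\<forall>a<4. \<forall>b<4. q ! a < q ! b \<longleftrightarrow> \<pi> ! (i a) < \<pi> ! (i b)" using qq pi by simp
  qed
  then show "\<exists>q\<in>{[2,1,3,4], [3,1,2,4], [4,1,2,3], [3,2,1,4], [4,2,1,3], [4,3,1,2]}.
            contains_classical q \<pi>" using q by blast
qed

lemma gf:
  fixes a :: "nat \<Rightarrow> rat"
  assumes a0: "a 0 = 1" and ak: "\<And>n. n \<ge> 1 \<Longrightarrow> a n = (of_nat n - 2) * 2^(n-1) + 2"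
  shows "Abs_fps a = (1 - 4 * fps_X + 5 * fps_X ^ 2) / ((1 - fps_X) * (1 - 2 * fps_X) ^ 2)"
proof -
  define f where "f = Abs_fps a"
  define q :: "rat fps" where "q = (1 - fps_X) * (1 - 2 * fps_X) ^ 2"
  have q: "q = 1 - fps_const 5 * fps_X + fps_const 8 * fps_X^2 - fps_const 4 * fps_X^3"
    unfolding q_def by (simp add: fps_numeral_fps_const[symmetric] algebra_simps power2_eq_square power3_eq_cube)
  have fq: "f * q = f - fps_const 5 * (fps_X * f) + fps_const 8 * (fps_X^2 * f) - fps_const 4 * (fps_X^3 * f)"
    unfolding q by (simp add: algebra_simps)
  have a1: "a (Suc 0) = 1" using ak[of 1] by simp
  have a2: "a 2 = 2" using ak[of 2] by simp
  have a3: "a 3 = 6" using ak[of 3] by simp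
  have cL: "fps_nth (f * q) n = a n - 5 * (if n < 1 then 0 else a (n-1)) + 8 * (if n < 2 then 0 else a (n-2)) - 4 * (if n < 3 then 0 else a (n-3))" for n
    apply (subst fq)
    apply (simp only: fps_sub_nth fps_add_nth fps_mult_left_const_nth fps_X_power_mult_nth)
    apply (simp add: fps_X_mult_nth f_def)
    done
  have cR: "fps_nth (1 - 4 * fps_X + 5 * fps_X ^ 2 :: rat fps) n = (if n = 0 then 1 else if n = 1 then -4 else if n = 2 then 5 else 0)" for n
    by (simp add: fps_numeral_fps_const fps_X_power_nth fps_X_nth)
  have "f * q = 1 - 4 * fps_X + 5 * fps_X ^ 2"
  proof (rule fps_ext)
    fix n
    show "fps_nth (f * q) n = fps_nth (1 - 4 * fps_X + 5 * fps_X ^ 2) n"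
    proof (cases "n < 4")
      case True
      then consider "n = 0" | "n = 1" | "n = 2" | "n = 3" by linarith
      then show ?thesis unfolding cL cR
        by cases (simp_all add: a0 a1 a2 a3)
    next
      case False
      then obtain k where k: "n = k + 4" by (metis add.commute le_Suc_ex not_less)
      have "fps_nth (f * q) n = a (k+4) - 5 * a (k+3) + 8 * a (k+2) - 4 * a (k+1)"
        unfolding cL k by (simp add: add.commute)
      also have "\<dots> = 0" by (simp add: ak numeral_eq_Suc algebra_simps)
      finally show ?thesis unfolding cR using k by simp
    qed
  qed
  moreover have "q \<noteq> 0"
  proof
    assume "q = 0" then have "fps_nth q 0 = 0" by simp
    then show False unfolding q by simp
  qed
  ultimately show ?thesis unfolding f_def[symmetric] q_def[symmetric]
    by (metis fps_divide_times_eq)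
qed

theorem theorem3p5:
  shows "(\<forall>n. \<forall>\<pi>\<in>perms n. avoids_pop 4 pop_p \<pi> \<longleftrightarrow>
            (\<forall>q\<in>{[2,1,3,4], [3,1,2,4], [4,1,2,3], [3,2,1,4], [4,2,1,3], [4,3,1,2]}.
               avoids_classical q \<pi>))
    \<and> a_seq 0 = 1
    \<and> (\<forall>n\<ge>1. int (a_seq n) = 2 * int (a_seq (n - 1)) + 2 ^ (n - 1) - 2)
    \<and> (\<forall>n\<ge>1. int (a_seq n) = (int n - 2) * 2 ^ (n - 1) + 2)
    \<and> Abs_fps (\<lambda>n. of_nat (a_seq n) :: rat)
        = (1 - 4 * fps_X + 5 * fps_X ^ 2) / ((1 - fps_X) * (1 - 2 * fps_X) ^ 2)"
proof -
  have aG: "a_seq n = card (G {1..n})" for n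
  proof -
    have "{\<pi> \<in> perms n. avoids_pop 4 pop_p \<pi>} = G {1..n}"
      by (auto simp: perms_def G_def avoids_good)
    then show ?thesis by (simp add: a_seq_def)
  qed
  have P1: "\<forall>n. \<forall>\<pi>\<in>perms n. avoids_pop 4 pop_p \<pi> \<longleftrightarrow>
            (\<forall>q\<in>{[2,1,3,4], [3,1,2,4], [4,1,2,3], [3,2,1,4], [4,2,1,3], [4,3,1,2]}.
               avoids_classical q \<pi>)"
  proof (intro allI ballI)
    fix n \<pi> assume "\<pi> \<in> perms n"
    then have d: "distinct \<pi>" by (simp add: perms_def)
    show "avoids_pop 4 pop_p \<pi> \<longleftrightarrow>
            (\<forall>q\<in>{[2,1,3,4], [3,1,2,4], [4,1,2,3], [3,2,1,4], [4,2,1,3], [4,3,1,2]}.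
               avoids_classical q \<pi>)"
      using class_iff[OF d] unfolding avoids_good avoids_classical_def by blast
  qed
  have G0: "G {} = {[]}" by (auto simp: G_def good_def)
  have P2: "a_seq 0 = 1" by (simp add: aG G0)
  have P4: "\<forall>n\<ge>1. int (a_seq n) = (int n - 2) * 2 ^ (n - 1) + 2"
  proof (intro allI impI)
    fix n :: nat assume "n \<ge> 1"
    then obtain k where k: "n = Suc k" by (cases n) auto
    show "int (a_seq n) = (int n - 2) * 2 ^ (n - 1) + 2"
      unfolding aG k using card_G[of "{1..Suc k}" k] by simp
  qed
  have P3: "\<forall>n\<ge>1. int (a_seq n) = 2 * int (a_seq (n - 1)) + 2 ^ (n - 1) - 2"
  proof (intro allI impI)
    fix n :: nat assume n1: "n \<ge> 1"
    show "int (a_seq n) = 2 * int (a_seq (n - 1)) + 2 ^ (n - 1) - 2"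
    proof (cases "n = 1")
      case True then show ?thesis using P4 P2 by simp
    next
      case False
      then obtain k where k: "n = Suc (Suc k)" using n1 by (cases n; cases "n - 1") auto
      have e1: "int (a_seq n) = int k * 2 ^ Suc k + 2" using P4 k by simp
      have e2: "int (a_seq (n - 1)) = (int k - 1) * 2 ^ k + 2" using P4[rule_format, of "Suc k"] k by simp
      show ?thesis unfolding e1 e2 using k by (simp add: algebra_simps)
    qed
  qed
  have P5: "Abs_fps (\<lambda>n. of_nat (a_seq n) :: rat)
        = (1 - 4 * fps_X + 5 * fps_X ^ 2) / ((1 - fps_X) * (1 - 2 * fps_X) ^ 2)"
  proof (rule gf)
    show "of_nat (a_seq 0) = (1::rat)" using P2 by simp
    fix n :: nat assume "n \<ge> 1"
    then have "int (a_seq n) = (int n - 2) * 2 ^ (n - 1) + 2" using P4 by blast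
    then have "(of_int (int (a_seq n)) :: rat) = of_int ((int n - 2) * 2 ^ (n - 1) + 2)" by simp
    then show "of_nat (a_seq n) = (of_nat n - 2) * 2 ^ (n - 1) + (2::rat)" by simp
  qed
  show ?thesis using P1 P2 P3 P4 P5 by blast
qed

end
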